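(* Consider the self-attention dynamics with LayerNorm, $X^{(t+1)}=D^{(t)}A^{(t)}X^{(t)}W_V^{(t)}$, with initial input $X^{(0)}\in\mathbb{R}^{N\times d}$ whose rows have unit Euclidean norm. Let $\mathcal{G}$ be quasi-strongly connected with radius $r$ and assume \textbf{A1} and \textbf{A2}. If $W_V^{(t)}$ is orthogonal for all $t\ge0$ and $\phi^{(0)}\ge 0$, then there exist $C>0$ and $\epsilon>0$ with $N\epsilon<1$ such that $$\mu(X^{(t)})\le C\,(1-\epsilon^{2r})^{t/(2r)}\qquad\text{for all }t\ge0,$$ i.e. all tokens converge exponentially to a common point of $\mathbb{S}^{d-1}$.
   Context: Tokens are the rows of $X\in\mathbb{R}^{N\times d}$. Attention mask: directed graph $\mathcal{G}$ on $[N]$, with $(j,i)\in E(\mathcal{G})$ meaning token $i$ attends to token $j$; $\mathcal{N}_i=\{k:(k,i)\in E(\mathcal{G})\}$. Masked softmax: $\mathrm{softmax}_{\mathcal{G}}(R)_{ij}=\exp(R_{ij})/\sum_{k\in\mathcal{N}_i}\exp(R_{ik})$ if $(j,i)\in E(\mathcal{G})$, else $0$. $A^{(t)}=\mathrm{softmax}_{\mathcal{G}}\big(X^{(t)}W_Q^{(t)}(X^{(t)}W_K^{(t)})^\top/\sqrt{d_{QK}}\big)$ with fixed $d_{QK}>0$. $D^{(t)}=\mathrm{diag}(d_1,\dots,d_N)$, $d_i=1/\|(A^{(t)}X^{(t)}W_V^{(t)})_{i,:}\|_2$. \textbf{A1}: $(i,i)\in E(\mathcal{G})$ for all $i$. \textbf{A2}: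 $\sup_t\max\{\|W_Q^{(t)}\|_2,\|W_K^{(t)}\|_2\}<\infty$. $\mu(X)=\|X-\mathbf{1}\mathbf{1}^\top X/N\|_F$. $\phi^{(t)}=\min_{i,j\in[N]}\langle X^{(t)}_{i,:},X^{(t)}_{j,:}\rangle$. A center node is a node from which every node is reachable by a directed path; $\mathcal{G}$ is quasi-strongly connected if it has a center node; its radius is $\min_{c\text{ center}}\max_v\mathrm{dist}(c,v)$, where $\mathrm{dist}(u,v)$ is the length of a shortest directed path from $u$ to $v$. *)

theory Defs
  imports "HOL-Analysis.Analysis"
begin

text \<open>Tokens are indexed by the finite type 'n (N = CARD('n)), features by 'd,
  query/key dimension by 'q (d_QK = CARD('q)). A matrix in R^{N x d} is real^'d^'n
  (rows X $ i). The mask graph is a set of pairs E; (j,i) in E means token i attends to j.\<close>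

definition masked_softmax :: "('n::finite \<times> 'n) set \<Rightarrow> real^'n^'n \<Rightarrow> real^'n^'n" where
  "masked_softmax E R = (\<chi> i j. if (j, i) \<in> E
      then exp (R $ i $ j) / (\<Sum>k\<in>{k. (k, i) \<in> E}. exp (R $ i $ k)) else 0)"

definition attention ::
  "('n::finite \<times> 'n) set \<Rightarrow> real^'q::finite^'d::finite \<Rightarrow> real^'q^'d \<Rightarrow> real^'d^'n \<Rightarrow> real^'n^'n" where
  "attention E WQ WK X =
     masked_softmax E ((1 / sqrt (real CARD('q))) *\<^sub>R ((X ** WQ) ** transpose (X ** WK)))"

text \<open>Row normalisation D M with D = diag(1/||M_i||).\<close>
definition layernorm :: "real^'d::finite^'n::finite \<Rightarrow> real^'d^'n" where
  "layernorm M = (\<chi> i. (1 / norm (M $ i)) *\<^sub>R (M $ i))"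

text \<open>mu(X) = || X - 1 1^T X / N ||_F (the norm on real^'d^'n is the Frobenius norm).\<close>
definition mu :: "real^'d::finite^'n::finite \<Rightarrow> real" where
  "mu X = norm (X - (\<chi> i. (1 / real CARD('n)) *\<^sub>R (\<Sum>j\<in>UNIV. X $ j)))"

definition phi :: "real^'d::finite^'n::finite \<Rightarrow> real" where
  "phi X = Min {inner (X $ i) (X $ j) | i j. True}"

definition spec_norm :: "real^'b::finite^'a::finite \<Rightarrow> real" where
  "spec_norm W = onorm (\<lambda>x. W *v x)"

text \<open>Directed graph notions: edges (u,v) in E are arcs u -> v.\<close>
definition is_center :: "('n \<times> 'n) set \<Rightarrow> 'n \<Rightarrow> bool" where
  "is_center E c \<longleftrightarrow> (\<forall>v. (c, v) \<in> E\<^sup>*)"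

definition quasi_strongly_connected :: "('n \<times> 'n) set \<Rightarrow> bool" where
  "quasi_strongly_connected E \<longleftrightarrow> (\<exists>c. is_center E c)"

definition gdist :: "('n \<times> 'n) set \<Rightarrow> 'n \<Rightarrow> 'n \<Rightarrow> nat" where
  "gdist E u v = (LEAST k. (u, v) \<in> E ^^ k)"

definition graph_radius :: "('n::finite \<times> 'n) set \<Rightarrow> nat" where
  "graph_radius E = Min {Max {gdist E c v | v. True} | c. is_center E c}"

end

theory Submission
  imports Defs
begin

lemma orth_inner:
  fixes W :: "real^'d::finite^'d"
  assumes "orthogonal_matrix W"
  shows "inner (x v* W) (y v* W) = inner x y"
proof -
  have "orthogonal_transformation (\<lambda>x. transpose W *v x)"
    unfolding orthogonal_transformation_matrix
    using assms by (simp add: orthogonal_matrix_transpose matrix_vector_mul_linear)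
  then show ?thesis by (simp add: orthogonal_transformation_def transpose_matrix_vector)
qed

lemma orth_norm:
  fixes W :: "real^'d::finite^'d"
  assumes "orthogonal_matrix W"
  shows "norm (x v* W) = norm x"
  using orth_inner[OF assms, of x x] by (simp add: norm_eq_sqrt_inner)

lemma mm_row: "((A ** B) ** W) $ i = (\<Sum>j\<in>UNIV. A $ i $ j *\<^sub>R B $ j) v* W"
  by (simp add: vec_eq_iff matrix_matrix_mult_def vector_matrix_mult_def sum_component)

lemma mm_row1: "(B ** W) $ i = B $ i v* W"
  by (simp add: vec_eq_iff matrix_matrix_mult_def vector_matrix_mult_def)
lemma conv_step:
  fixes x :: "'n::finite \<Rightarrow> 'v::real_inner" and a b :: "'n \<Rightarrow> real"
  assumes unit: "\<And>j. norm (x j) = 1"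
    and nn: "\<And>j l. inner (x j) (x l) \<ge> 0"
    and a0: "\<And>j. a j \<ge> 0" and as: "sum a UNIV = 1"
    and b0: "\<And>j. b j \<ge> 0" and bs: "sum b UNIV = 1"
  defines "y \<equiv> (\<Sum>j\<in>UNIV. a j *\<^sub>R x j)" and "z \<equiv> (\<Sum>j\<in>UNIV. b j *\<^sub>R x j)"
  shows "y \<noteq> 0" "norm y \<le> 1" "inner y z \<ge> 0"
    "1 - inner y z = (\<Sum>j\<in>UNIV. \<Sum>l\<in>UNIV. a j * b l * (1 - inner (x j) (x l)))"
proof -
  obtain j0 where j0: "a j0 > 0"
  proof (rule ccontr)
    assume "\<not> thesis"
    then have "\<forall>j. a j = 0" using a0 that by (metis less_eq_real_def)
    then show False using as by simp
  qed
  have "inner (x j0) y = (\<Sum>l\<in>UNIV. a l * inner (x j0) (x l))"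
    by (simp add: y_def inner_sum_right)
  also have "\<dots> \<ge> a j0 * inner (x j0) (x j0)"
    by (rule member_le_sum) (auto intro: mult_nonneg_nonneg a0 nn)
  finally have "inner (x j0) y \<ge> a j0" using unit[of j0] by (simp add: dot_square_norm)
  then show "y \<noteq> 0" using j0 by auto
  have "norm y \<le> (\<Sum>j\<in>UNIV. norm (a j *\<^sub>R x j))" unfolding y_def by (rule norm_sum)
  also have "\<dots> = 1" using a0 unit as by simp
  finally show "norm y \<le> 1" .
  have yz: "inner y z = (\<Sum>j\<in>UNIV. \<Sum>l\<in>UNIV. a j * b l * inner (x j) (x l))"
    by (simp add: y_def z_def inner_sum_left inner_sum_right sum_distrib_left mult.assoc, subst sum.swap, simp add: mult.left_commute)
  then show "inner y z \<ge> 0"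
    by (auto intro!: sum_nonneg mult_nonneg_nonneg a0 b0 nn)
  have "(\<Sum>j\<in>UNIV. \<Sum>l\<in>UNIV. a j * b l) = 1"
    using as bs by (simp add: sum_product[symmetric])
  then show "1 - inner y z = (\<Sum>j\<in>UNIV. \<Sum>l\<in>UNIV. a j * b l * (1 - inner (x j) (x l)))"
    by (simp add: yz right_diff_distrib sum_subtractf)
qed

lemma ln_step:
  fixes A :: "real^'n::finite^'n" and Y :: "real^'d::finite^'n" and W :: "real^'d^'d"
  assumes unit: "\<And>j. norm (Y $ j) = 1"
    and nn: "\<And>j l. inner (Y $ j) (Y $ l) \<ge> 0"
    and a0: "\<And>i j. A $ i $ j \<ge> 0" and as: "\<And>i. (\<Sum>j\<in>UNIV. A $ i $ j) = 1"
    and orth: "orthogonal_matrix W"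
  defines "L \<equiv> layernorm ((A ** Y) ** W)"
  shows "norm (L $ i) = 1"
    "1 - inner (L $ i) (L $ k) \<le> (\<Sum>j\<in>UNIV. \<Sum>l\<in>UNIV. A$i$j * A$k$l * (1 - inner (Y $ j) (Y $ l)))"
proof -
  define y where "y i = (\<Sum>j\<in>UNIV. A $ i $ j *\<^sub>R Y $ j)" for i
  have L: "L $ i = (1 / norm (y i)) *\<^sub>R (y i v* W)" for i
    by (simp add: L_def layernorm_def mm_row y_def orth_norm[OF orth])
  note cs = conv_step[of "\<lambda>j. Y $ j", OF unit nn a0 as a0 as, folded y_def]
  have yn: "y i \<noteq> 0" "norm (y i) \<le> 1" for i using cs by auto
  show "norm (L $ i) = 1" using yn[of i] by (simp add: L orth_norm[OF orth])
  have "inner (L $ i) (L $ k) = inner (y i) (y k) / (norm (y i) * norm (y k))"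
    by (simp add: L orth_inner[OF orth])
  also have "\<dots> \<ge> inner (y i) (y k)"
  proof -
    have p: "0 < norm (y i) * norm (y k)" "norm (y i) * norm (y k) \<le> 1"
      using yn[of i] yn[of k] by (auto simp: mult_le_one)
    have "inner (y i) (y k) \<ge> 0" using cs(3)[of i k] by simp
    then show ?thesis using p by (simp add: le_divide_eq mult_left_le)
  qed
  finally show "1 - inner (L $ i) (L $ k) \<le> (\<Sum>j\<in>UNIV. \<Sum>l\<in>UNIV. A$i$j * A$k$l * (1 - inner (Y $ j) (Y $ l)))"
    using cs(4)[of i k] by linarith
qed
lemma entry_bound:
  fixes W :: "real^'q::finite^'d::finite"
  assumes "spec_norm W \<le> B"
  shows "\<bar>W $ i $ j\<bar> \<le> B"
proof -
  have "\<bar>W $ i $ j\<bar> = \<bar>column j W $ i\<bar>" by (simp add: column_def)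
  also have "\<dots> \<le> norm (column j W)" by (rule component_le_norm_cart)
  also have "\<dots> \<le> onorm ((*v) W)" by (rule norm_column_le_onorm)
  also have "\<dots> \<le> B" using assms by (simp add: spec_norm_def)
  finally show ?thesis .
qed

lemma vm_bound:
  fixes W :: "real^'q::finite^'d::finite" and x :: "real^'d"
  assumes "spec_norm W \<le> B" "norm x \<le> 1"
  shows "norm (x v* W) \<le> real CARD('d) * real CARD('q) * B"
proof -
  have c: "\<bar>(x v* W) $ j\<bar> \<le> real CARD('d) * B" for j
  proof -
    have "\<bar>(x v* W) $ j\<bar> = \<bar>\<Sum>i\<in>UNIV. x $ i * W $ i $ j\<bar>" by (simp add: vector_matrix_mult_def)
    also have "\<dots> \<le> (\<Sum>i\<in>UNIV. \<bar>x $ i * W $ i $ j\<bar>)" by (rule sum_abs)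
    also have "\<dots> \<le> (\<Sum>i\<in>(UNIV::'d set). B)"
    proof (rule sum_mono)
      fix i
      have "\<bar>x $ i\<bar> \<le> 1" using component_le_norm_cart[of x i] assms(2) by linarith
      moreover have "\<bar>W $ i $ j\<bar> \<le> B" by (rule entry_bound[OF assms(1)])
      ultimately show "\<bar>x $ i * W $ i $ j\<bar> \<le> B"
        by (simp add: abs_mult) (metis abs_ge_zero mult_left_le_one_le order_trans mult.commute mult_right_mono)
    qed
    also have "\<dots> = real CARD('d) * B" by simp
    finally show ?thesis .
  qed
  have "norm (x v* W) \<le> (\<Sum>j\<in>UNIV. \<bar>(x v* W) $ j\<bar>)" by (rule norm_le_l1_cart)
  also have "\<dots> \<le> (\<Sum>j\<in>(UNIV::'q set). real CARD('d) * B)" by (rule sum_mono) (rule c)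
  also have "\<dots> = real CARD('d) * real CARD('q) * B" by simp
  finally show ?thesis .
qed

lemma attn_props:
  fixes X :: "real^'d::finite^'n::finite" and WQ WK :: "real^'q::finite^'d"
  assumes unit: "\<And>i. norm (X $ i) = 1" and A1: "\<And>i. (i, i) \<in> E"
    and bq: "spec_norm WQ \<le> B" and bk: "spec_norm WK \<le> B"
  defines "K \<equiv> real CARD('d) * real CARD('q) * B"
  defines "M \<equiv> (1 / sqrt (real CARD('q))) * (K * K)"
  defines "A \<equiv> attention E WQ WK X"
  shows "A $ i $ j \<ge> 0" "(\<Sum>j\<in>UNIV. A $ i $ j) = 1"
    "(j, i) \<in> E \<Longrightarrow> A $ i $ j \<ge> exp (- M) / (real CARD('n) * exp M)"
proof -
  define R where "R = (1 / sqrt (real CARD('q))) *\<^sub>R ((X ** WQ) ** transpose (X ** WK))"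
  have A: "A $ i $ j = (if (j, i) \<in> E then exp (R $ i $ j) / (\<Sum>k\<in>{k. (k, i) \<in> E}. exp (R $ i $ k)) else 0)" for i j
    by (simp add: A_def attention_def masked_softmax_def R_def)
  have Rb: "\<bar>R $ i $ j\<bar> \<le> M" for i j
  proof -
    have "R $ i $ j = (1 / sqrt (real CARD('q))) * inner (X $ i v* WQ) (X $ j v* WK)"
      by (simp add: R_def matrix_matrix_mult_def vector_matrix_mult_def inner_vec_def transpose_def)
    moreover have "\<bar>inner (X $ i v* WQ) (X $ j v* WK)\<bar> \<le> K * K"
    proof -
      have "\<bar>inner (X $ i v* WQ) (X $ j v* WK)\<bar> \<le> norm (X $ i v* WQ) * norm (X $ j v* WK)"
        by (rule Cauchy_Schwarz_ineq2)
      also have "\<dots> \<le> K * K"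
      proof -
        have 1: "norm (X $ i v* WQ) \<le> K" "norm (X $ j v* WK) \<le> K"
          using vm_bound[OF bq, of "X $ i"] vm_bound[OF bk, of "X $ j"] unit by (auto simp: K_def)
        have "0 \<le> K" using 1(1) norm_ge_zero[of "X $ i v* WQ"] by linarith
        then show ?thesis using 1 by (intro mult_mono) auto
      qed
      finally show ?thesis .
    qed
    ultimately show ?thesis by (simp add: M_def abs_mult divide_right_mono)
  qed
  have fin: "finite {k. (k, i) \<in> E}" for i by simp
  have Spos: "(\<Sum>k\<in>{k. (k, i) \<in> E}. exp (R $ i $ k)) > 0" for i
    by (rule sum_pos) (use A1 in auto)
  show "A $ i $ j \<ge> 0" using Spos[of i] by (simp add: A)
  have "(\<Sum>j\<in>UNIV. A $ i $ j) = (\<Sum>j\<in>UNIV. if (j, i) \<in> E then exp (R $ i $ j) / (\<Sum>k\<in>{k. (k, i) \<in> E}. exp (R $ i $ k)) else 0)"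
    by (simp add: A)
  also have "\<dots> = (\<Sum>j\<in>{j. (j, i) \<in> E}. exp (R $ i $ j) / (\<Sum>k\<in>{k. (k, i) \<in> E}. exp (R $ i $ k)))"
    by (simp add: sum.If_cases Collect_conj_eq[symmetric])
  also have "\<dots> = 1" using Spos[of i] by (simp add: sum_divide_distrib[symmetric])
  finally show "(\<Sum>j\<in>UNIV. A $ i $ j) = 1" .
  assume ji: "(j, i) \<in> E"
  have num: "exp (- M) \<le> exp (R $ i $ j)" using Rb[of i j] by simp
  have "(\<Sum>k\<in>{k. (k, i) \<in> E}. exp (R $ i $ k)) \<le> (\<Sum>k\<in>{k. (k, i) \<in> E}. exp M)"
    by (rule sum_mono) (use Rb in \<open>auto simp: abs_le_iff\<close>)
  also have "\<dots> \<le> real CARD('n) * exp M"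
    by (simp add: card_mono)
  finally have den: "(\<Sum>k\<in>{k. (k, i) \<in> E}. exp (R $ i $ k)) \<le> real CARD('n) * exp M" .
  have "exp (- M) / (real CARD('n) * exp M) \<le> exp (R $ i $ j) / (\<Sum>k\<in>{k. (k, i) \<in> E}. exp (R $ i $ k))"
    by (rule frac_le) (use num den Spos in auto)
  then show "A $ i $ j \<ge> exp (- M) / (real CARD('n) * exp M)" using ji by (simp add: A)
qed
lemma relpow_mono_refl:
  assumes refl: "\<And>i. (i, i) \<in> E" and ab: "(a, b) \<in> E ^^ m" and mn: "m \<le> n"
  shows "(a, b) \<in> E ^^ n"
  using mn
proof (induction n rule: dec_induct)
  case base then show ?case using ab .
next
  case (step n) then show ?case using refl relpow_Suc_I by metis
qed

lemma radius_center:
  fixes E :: "('n::finite \<times> 'n) set"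
  assumes qsc: "quasi_strongly_connected E" and refl: "\<And>i. (i, i) \<in> E"
  shows "\<exists>c. \<forall>v. (c, v) \<in> E ^^ graph_radius E"
proof -
  define S where "S = {Max {gdist E c v | v. True} | c. is_center E c}"
  have "S \<subseteq> range (\<lambda>c. Max {gdist E c v | v. True})" by (auto simp: S_def)
  then have fS: "finite S" by (rule finite_subset) simp
  have "S \<noteq> {}" using qsc by (auto simp: S_def quasi_strongly_connected_def)
  then have "Min S \<in> S" using fS by (rule Min_in[rotated])
  then obtain c where c: "is_center E c" and r: "graph_radius E = Max {gdist E c v | v. True}"
    by (auto simp: S_def graph_radius_def)
  show ?thesis
  proof (intro exI allI)
    fix v
    have f: "finite {gdist E c v | v. True}"
      by (rule finite_subset[of _ "range (gdist E c)"]) auto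
    have le: "gdist E c v \<le> graph_radius E" unfolding r by (rule Max_ge[OF f]) auto
    have "\<exists>k. (c, v) \<in> E ^^ k" using c by (simp add: is_center_def rtrancl_power)
    then have "(c, v) \<in> E ^^ gdist E c v" unfolding gdist_def by (rule LeastI_ex)
    then show "(c, v) \<in> E ^^ graph_radius E" using relpow_mono_refl[OF refl] le by blast
  qed
qed

lemma contraction:
  fixes \<delta> :: "nat \<Rightarrow> 'n::finite \<Rightarrow> 'n \<Rightarrow> real" and a :: "nat \<Rightarrow> 'n \<Rightarrow> 'n \<Rightarrow> real"
  assumes step: "\<And>t i k. \<delta> (Suc t) i k \<le> (\<Sum>j\<in>UNIV. \<Sum>l\<in>UNIV. a t i j * a t k l * \<delta> t j l)"
    and a0: "\<And>t i j. a t i j \<ge> 0" and as: "\<And>t i. (\<Sum>j\<in>UNIV. a t i j) = 1"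
    and aE: "\<And>t i j. (j, i) \<in> E \<Longrightarrow> a t i j \<ge> \<alpha>" and al: "\<alpha> \<ge> 0"
    and diag: "\<And>t j. \<delta> t j j = 0"
    and D: "\<And>j l. \<delta> t j l \<le> D"
  shows "\<delta> (t + m) i k \<le> D * (1 - (if (c, i) \<in> E ^^ m then \<alpha> ^ m else 0) * (if (c, k) \<in> E ^^ m then \<alpha> ^ m else 0))"
proof (induction m arbitrary: i k)
  case 0
  have "D \<ge> 0" using D[of c c] diag[of t c] by simp
  then show ?case using D[of i k] diag[of t c] by auto
next
  case (Suc m)
  define g where "g i = (if (c, i) \<in> E ^^ m then \<alpha> ^ m else 0)" for i
  define g' where "g' i = (if (c, i) \<in> E ^^ Suc m then \<alpha> ^ Suc m else 0)" for i
  have D0: "D \<ge> 0" using D[of c c] diag[of t c] by simp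
  have g0: "g j \<ge> 0" for j using al by (simp add: g_def)
  define G where "G i = (\<Sum>j\<in>UNIV. a (t+m) i j * g j)" for i
  have G0: "G i \<ge> 0" for i unfolding G_def by (intro sum_nonneg mult_nonneg_nonneg a0 g0)
  have Gg: "G i \<ge> g' i" for i
  proof (cases "(c, i) \<in> E ^^ Suc m")
    case True
    then obtain j where j: "(c, j) \<in> E ^^ m" "(j, i) \<in> E" by (rule relpow_Suc_E)
    have "\<alpha> ^ Suc m = \<alpha> * \<alpha> ^ m" by simp
    also have "\<dots> \<le> a (t+m) i j * g j"
      using j aE[OF j(2), of "t+m"] al by (simp add: g_def mult_right_mono)
    also have "\<dots> \<le> G i" unfolding G_def
      by (rule member_le_sum) (auto intro: mult_nonneg_nonneg a0 g0)
    finally show ?thesis using True by (simp add: g'_def)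
  next
    case False then show ?thesis using G0 by (simp add: g'_def)
  qed
  have g'0: "g' i \<ge> 0" for i using al by (simp add: g'_def)
  have "\<delta> (t + Suc m) i k \<le> (\<Sum>j\<in>UNIV. \<Sum>l\<in>UNIV. a (t+m) i j * a (t+m) k l * \<delta> (t+m) j l)"
    using step[of "t+m" i k] by simp
  also have "\<dots> \<le> (\<Sum>j\<in>UNIV. \<Sum>l\<in>UNIV. a (t+m) i j * a (t+m) k l * (D * (1 - g j * g l)))"
  proof -
    have IH: "\<delta> (t+m) j l \<le> D * (1 - g j * g l)" for j l using Suc.IH[of j l] unfolding g_def .
    show ?thesis by (intro sum_mono mult_left_mono IH) (auto intro: mult_nonneg_nonneg a0)
  qed
  also have "\<dots> = D * ((\<Sum>j\<in>UNIV. a (t+m) i j) * (\<Sum>l\<in>UNIV. a (t+m) k l)) - D * (G i * G k)"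
  proof -
    have e1: "(\<Sum>j\<in>UNIV. a (t+m) i j) * (\<Sum>l\<in>UNIV. a (t+m) k l) = (\<Sum>j\<in>UNIV. \<Sum>l\<in>UNIV. a (t+m) i j * a (t+m) k l)"
      by (rule sum_product)
    have e2: "G i * G k = (\<Sum>j\<in>UNIV. \<Sum>l\<in>UNIV. (a (t+m) i j * g j) * (a (t+m) k l * g l))"
      unfolding G_def by (rule sum_product)
    show ?thesis unfolding e1 e2
      by (simp add: sum_distrib_left right_diff_distrib sum_subtractf algebra_simps)
  qed
  also have "\<dots> = D * (1 - G i * G k)" by (simp add: as algebra_simps)
  also have "\<dots> \<le> D * (1 - g' i * g' k)"
    using D0 Gg[of i] Gg[of k] g'0[of i] g'0[of k]
    by (intro mult_left_mono) (auto intro!: mult_mono)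
  finally show ?case by (simp add: g'_def)
qed
lemma mu_bound:
  fixes X :: "real^'d::finite^'n::finite"
  assumes unit: "\<And>i. norm (X $ i) = 1" and e: "\<And>i j. 1 - inner (X $ i) (X $ j) \<le> e"
  shows "mu X \<le> sqrt (real CARD('n) * (2 * e))"
proof -
  define m where "m = (1 / real CARD('n)) *\<^sub>R (\<Sum>j\<in>UNIV. X $ j)"
  have N0: "real CARD('n) > 0" by simp
  have e0: "e \<ge> 0" using e[of undefined undefined] unit[of undefined] by (simp add: dot_square_norm)
  have row: "norm (X $ i - m) \<le> sqrt (2 * e)" for i
  proof -
    have "X $ i - m = (1 / real CARD('n)) *\<^sub>R (\<Sum>j\<in>UNIV. X $ i - X $ j)"
      using N0 by (simp add: m_def sum_subtractf scaleR_diff_right sum_constant_scaleR del: sum_constant)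
    then have "norm (X $ i - m) = (1 / real CARD('n)) * norm (\<Sum>j\<in>UNIV. X $ i - X $ j)" by simp
    also have "\<dots> \<le> (1 / real CARD('n)) * (\<Sum>j\<in>UNIV. norm (X $ i - X $ j))"
      by (intro mult_left_mono norm_sum) simp
    also have "\<dots> \<le> (1 / real CARD('n)) * (\<Sum>j\<in>(UNIV::'n set). sqrt (2 * e))"
    proof (intro mult_left_mono sum_mono)
      fix j
      have "norm (X $ i - X $ j) ^ 2 = 2 - 2 * inner (X $ i) (X $ j)"
      proof -
        have ii: "inner (X $ i) (X $ i) = 1" "inner (X $ j) (X $ j) = 1"
          using unit[of i] unit[of j] by (simp_all add: dot_square_norm)
        have "norm (X $ i - X $ j) ^ 2 = inner (X $ i - X $ j) (X $ i - X $ j)"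
          by (rule power2_norm_eq_inner)
        also have "\<dots> = 2 - 2 * inner (X $ i) (X $ j)"
          using ii by (simp add: inner_diff_left inner_diff_right inner_commute)
        finally show ?thesis .
      qed
      also have "\<dots> \<le> 2 * e" using e[of i j] by simp
      finally show "norm (X $ i - X $ j) \<le> sqrt (2 * e)" by (simp add: real_le_rsqrt)
    qed simp
    also have "\<dots> = sqrt (2 * e)" using N0 by simp
    finally show ?thesis .
  qed
  have "mu X = sqrt (\<Sum>i\<in>UNIV. (norm (X $ i - m))\<^sup>2)"
    by (simp add: mu_def norm_vec_def L2_set_def m_def)
  also have "\<dots> \<le> sqrt (\<Sum>i\<in>(UNIV::'n set). 2 * e)"
  proof (intro real_sqrt_le_mono sum_mono)
    fix i
    have "(norm (X $ i - m))\<^sup>2 \<le> (sqrt (2 * e))\<^sup>2" by (intro power_mono row) simp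
    then show "(norm (X $ i - m))\<^sup>2 \<le> 2 * e" using e0 by simp
  qed
  also have "\<dots> = sqrt (real CARD('n) * (2 * e))" by simp
  finally show ?thesis .
qed
theorem corollary1:
  fixes E :: "('n::finite \<times> 'n) set"
    and X :: "nat \<Rightarrow> real^'d::finite^'n"
    and WQ WK :: "nat \<Rightarrow> real^'q::finite^'d"
    and WV :: "nat \<Rightarrow> real^'d^'d"
    and r :: nat
  assumes dyn: "\<And>t. X (Suc t) = layernorm ((attention E (WQ t) (WK t) (X t) ** X t) ** WV t)"
    and unit0: "\<And>i. norm (X 0 $ i) = 1"
    and qsc: "quasi_strongly_connected E"
    and rad: "r = graph_radius E"
    and A1: "\<And>i. (i, i) \<in> E"
    and A2: "\<exists>B. \<forall>t. max (spec_norm (WQ t)) (spec_norm (WK t)) \<le> B"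
    and orth: "\<And>t. orthogonal_matrix (WV t)"
    and phi0: "phi (X 0) \<ge> 0"
  shows "\<exists>C>0. \<exists>\<epsilon>>0. real CARD('n) * \<epsilon> < 1 \<and>
           (\<forall>t. mu (X t) \<le> C * (1 - \<epsilon> ^ (2 * r)) powr (real t / real (2 * r)))"
proof -
  obtain B0 where B0: "\<And>t. max (spec_norm (WQ t)) (spec_norm (WK t)) \<le> B0" using A2 by blast
  define B where "B = max B0 0"
  have bq: "spec_norm (WQ t) \<le> B" and bk: "spec_norm (WK t) \<le> B" for t
    using B0[of t] by (auto simp: B_def)
  define K where "K = real CARD('d) * real CARD('q) * B"
  define M where "M = (1 / sqrt (real CARD('q))) * (K * K)"
  define \<alpha> where "\<alpha> = exp (- M) / (real CARD('n) * exp M)"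
  define a where "a t i j = attention E (WQ t) (WK t) (X t) $ i $ j" for t i j
  have M0: "M \<ge> 0" by (simp add: M_def K_def B_def)
  have al0: "\<alpha> > 0" by (simp add: \<alpha>_def)
  have al1: "\<alpha> \<le> 1"
  proof -
    have "exp (- M) \<le> 1" using M0 by simp
    moreover have "1 \<le> real CARD('n) * exp M"
    proof -
      have "0 < CARD('n)" by simp
      then have n1: "1 \<le> real CARD('n)" by linarith
      have "1 \<le> exp M" using M0 by simp
      then show ?thesis using n1 mult_mono[OF n1 \<open>1 \<le> exp M\<close>] by simp
    qed
    ultimately have "exp (- M) \<le> real CARD('n) * exp M" by linarith
    then show ?thesis by (simp add: \<alpha>_def)
  qed
  have inv: "(\<forall>i. norm (X t $ i) = 1) \<and> (\<forall>j l. inner (X t $ j) (X t $ l) \<ge> 0)" for t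
  proof (induction t)
    case 0
    have "finite {inner (X 0 $ i) (X 0 $ j) | i j. True}"
      by (rule finite_subset[of _ "(\<lambda>(i, j). inner (X 0 $ i) (X 0 $ j)) ` UNIV"]) auto
    then have "phi (X 0) \<le> inner (X 0 $ j) (X 0 $ l)" for j l
      unfolding phi_def by (rule Min_le) auto
    then show ?case using unit0 phi0 by (meson order_trans)
  next
    case (Suc t)
    have u: "\<And>j. norm (X t $ j) = 1" and nn: "\<And>j l. inner (X t $ j) (X t $ l) \<ge> 0" using Suc by auto
    note ap = attn_props[OF u A1 bq[of t] bk[of t]]
    note ls = ln_step[OF u nn ap(1) ap(2) orth[of t], folded dyn]
    have "inner (X (Suc t) $ i) (X (Suc t) $ k) \<ge> 0" for i k
    proof -
      let ?A = "attention E (WQ t) (WK t) (X t)"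
      have "(\<Sum>j\<in>UNIV. \<Sum>l\<in>UNIV. ?A$i$j * ?A$k$l * (1 - inner (X t $ j) (X t $ l)))
            \<le> (\<Sum>j\<in>UNIV. \<Sum>l\<in>UNIV. ?A$i$j * ?A$k$l)"
        using nn by (intro sum_mono mult_left_le) (auto intro: mult_nonneg_nonneg ap(1))
      also have "\<dots> = (\<Sum>j\<in>UNIV. ?A$i$j) * (\<Sum>l\<in>UNIV. ?A$k$l)" by (rule sum_product[symmetric])
      also have "\<dots> = 1" using ap(2) by simp
      finally show ?thesis using ls(2)[of i k] by linarith
    qed
    then show ?case using ls(1) by auto
  qed
  define \<delta> where "\<delta> t j l = 1 - inner (X t $ j) (X t $ l)" for t j l
  have u: "norm (X t $ j) = 1" for t j using inv by auto
  have d0: "\<delta> t j l \<ge> 0" for t j l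
  proof -
    have "inner (X t $ j) (X t $ l) \<le> norm (X t $ j) * norm (X t $ l)" by (rule norm_cauchy_schwarz)
    then show ?thesis using u[of t j] u[of t l] by (simp add: \<delta>_def)
  qed
  have d1: "\<delta> t j l \<le> 1" for t j l using inv by (simp add: \<delta>_def)
  have diag: "\<delta> t j j = 0" for t j using u[of t j] by (simp add: \<delta>_def dot_square_norm)
  have ap: "a t i j \<ge> 0" "(\<Sum>j\<in>UNIV. a t i j) = 1" "(j, i) \<in> E \<Longrightarrow> a t i j \<ge> \<alpha>" for t i j
    using attn_props[OF u[of t] A1 bq[of t] bk[of t]] unfolding a_def \<alpha>_def M_def K_def by auto
  have step: "\<delta> (Suc t) i k \<le> (\<Sum>j\<in>UNIV. \<Sum>l\<in>UNIV. a t i j * a t k l * \<delta> t j l)" for t i k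
  proof -
    have nn: "\<And>j l. 0 \<le> inner (X t $ j) (X t $ l)" using inv by auto
    note ap' = attn_props[OF u[of t] A1 bq[of t] bk[of t]]
    have "1 - inner (X (Suc t) $ i) (X (Suc t) $ k) \<le> (\<Sum>j\<in>UNIV. \<Sum>l\<in>UNIV. attention E (WQ t) (WK t) (X t) $ i $ j * attention E (WQ t) (WK t) (X t) $ k $ l * (1 - inner (X t $ j) (X t $ l)))"
      using ln_step(2)[OF u[of t] nn ap'(1) ap'(2) orth[of t], of i k] by (simp add: dyn)
    then show ?thesis by (simp add: \<delta>_def a_def)
  qed
  have aE: "\<And>t i j. (j, i) \<in> E \<Longrightarrow> a t i j \<ge> \<alpha>" using ap(3) by blast
  note contr = contraction[of \<delta> a E \<alpha>, OF step ap(1) ap(2) aE less_imp_le[OF al0] diag]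
  obtain c where c: "\<And>v. (c, v) \<in> E ^^ r" using radius_center[OF qsc A1] rad by auto
  show ?thesis
  proof (cases "r = 0")
    case True
    then have cv: "v = c" for v using c[of v] by simp
    then have U: "UNIV = {c}" by auto
    have mu0: "mu (X t) = 0" for t
    proof -
      have "X t - (\<chi> i. (1 / real CARD('n)) *\<^sub>R (\<Sum>j\<in>UNIV. X t $ j)) = 0"
        by (simp add: vec_eq_iff U) (metis cv)
      then show ?thesis by (simp add: mu_def)
    qed
    show ?thesis
      by (rule exI[of _ 1], simp, rule exI[of _ "1/2"]) (simp add: U True mu0)
  next
    case False
    then have r0: "r > 0" by simp
    define \<rho> where "\<rho> = 1 - \<alpha> ^ (2 * r)"
    have weak: "\<delta> (t + m) i k \<le> D" if "\<And>j l. \<delta> t j l \<le> D" for t m i k D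
    proof -
      have D0: "D \<ge> 0" using that[of c c] diag[of t c] by simp
      have "\<delta> (t + m) i k \<le> D * (1 - (if (c, i) \<in> E ^^ m then \<alpha> ^ m else 0) * (if (c, k) \<in> E ^^ m then \<alpha> ^ m else 0))"
        by (rule contr) (auto intro: that)
      also have "\<dots> \<le> D" using D0 al0 by (intro mult_left_le) auto
      finally show ?thesis .
    qed
    have blk: "\<delta> (t + r) i k \<le> D * \<rho>" if "\<And>j l. \<delta> t j l \<le> D" for t i k D
    proof -
      have "\<delta> (t + r) i k \<le> D * (1 - (if (c, i) \<in> E ^^ r then \<alpha> ^ r else 0) * (if (c, k) \<in> E ^^ r then \<alpha> ^ r else 0))"
        by (rule contr) (auto intro: that)
      also have "\<dots> = D * \<rho>" using c by (simp add: \<rho>_def power_add[symmetric] mult_2)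
      finally show ?thesis .
    qed
    have geo: "\<delta> (n * r + s) i k \<le> \<rho> ^ n" for n s i k
    proof (induction n arbitrary: s i k)
      case 0 then show ?case using d1 by simp
    next
      case (Suc n)
      have "\<delta> (n * r + r) j l \<le> \<rho> ^ n * \<rho>" for j l
        by (rule blk) (use Suc.IH[of 0] in simp)
      then have "\<delta> (Suc n * r + s) i k \<le> \<rho> ^ n * \<rho>"
        using weak[of "n * r + r" "\<rho> ^ n * \<rho>" s i k] by (simp add: add.commute)
      then show ?case by (simp add: mult.commute)
    qed
    define \<epsilon> where "\<epsilon> = \<alpha> / 2"
    define \<rho>' where "\<rho>' = 1 - \<epsilon> ^ (2 * r)"
    have e0: "\<epsilon> > 0" using al0 by (simp add: \<epsilon>_def)
    have e1: "\<epsilon> < 1" using al1 by (simp add: \<epsilon>_def)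
    have rp0: "\<rho>' > 0" using e0 e1 r0 by (simp add: \<rho>'_def power_less_one_iff)
    have rp1: "\<rho>' \<le> 1" using e0 by (simp add: \<rho>'_def)
    have rr: "\<rho> \<le> \<rho>'" using al0 by (simp add: \<rho>_def \<rho>'_def \<epsilon>_def power_mono)
    have r00: "\<rho> \<ge> 0" using al0 al1 by (simp add: \<rho>_def power_le_one)
    have Ne: "real CARD('n) * \<epsilon> < 1"
    proof -
      have "real CARD('n) * \<epsilon> = exp (- M) / exp M / 2" by (simp add: \<epsilon>_def \<alpha>_def)
      also have "\<dots> \<le> 1 / 2" using M0 by (simp add: divide_le_eq_1 order_trans[of _ 1])
      finally show ?thesis by simp
    qed
    define C where "C = sqrt (real CARD('n) * 2) / \<rho>' powr (1 / 2)"
    have C0: "C > 0" using rp0 by (simp add: C_def)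
    have main: "mu (X t) \<le> C * \<rho>' powr (real t / real (2 * r))" for t
    proof -
      define n where "n = t div r"
      define s where "s = t mod r"
      have t: "t = n * r + s" by (simp add: n_def s_def)
      have s: "s < r" using r0 by (simp add: s_def)
      have "mu (X t) \<le> sqrt (real CARD('n) * (2 * \<rho> ^ n))"
        by (rule mu_bound[OF u]) (use geo[of n s] in \<open>simp add: t \<delta>_def\<close>)
      also have "\<dots> \<le> sqrt (real CARD('n) * (2 * \<rho>' ^ n))"
        using rr r00 by (simp add: power_mono)
      also have "\<dots> = sqrt (real CARD('n) * 2) * \<rho>' powr (real n / 2)"
      proof -
        have "sqrt (\<rho>' ^ n) = \<rho>' powr (real n / 2)"
          using rp0 by (simp add: powr_realpow[symmetric] powr_half_sqrt[symmetric] powr_powr)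
        then show ?thesis by (simp add: real_sqrt_mult)
      qed
      also have "\<dots> = C * \<rho>' powr ((real n + 1) / 2)"
        using rp0 by (simp add: C_def add_divide_distrib powr_add)
      also have "\<dots> \<le> C * \<rho>' powr (real t / real (2 * r))"
      proof -
        have "real t / real (2 * r) \<le> (real n + 1) / 2"
        proof -
          have "real t \<le> (real n + 1) * real r" using s by (simp add: t algebra_simps)
          then show ?thesis using r0 by (simp add: divide_le_eq algebra_simps)
        qed
        then show ?thesis using C0 rp0 rp1 by (intro mult_left_mono powr_mono') auto
      qed
      finally show ?thesis .
    qed
    show ?thesis
      using C0 e0 Ne main unfolding \<rho>'_def by blast
  qed
qed

end
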